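(* Work in $M^*$ (described below) and suppose $H=\bigcup_{\alpha<\kappa}H_\alpha$ is a $B_2$-filtration of $H$, i.e. a smooth (continuous) ascending chain of pure subgroups $H_\alpha$ with $H_0=0$ such that for every $\alpha<\kappa$, $H_{\alpha+1}=H_\alpha+B_\alpha$ for some finite rank Butler group $B_\alpha$. Then the set $C=\{\delta<\kappa : H_\delta=\langle x_n,y_\beta : n\in\omega,\ \beta<\delta\rangle_*\}$ is a closed unbounded subset of $\kappa$.
   Context: $\langle S\rangle_*$ denotes the purification in $H$ of the subgroup generated by $S$. A finite rank Butler group is a pure subgroup of a finite rank completely decomposable group. $M$ is a countable transitive model of ZFC+GCH, $\kappa\geq\aleph_4$ is regular in $M$, $\mathbb{P}$ is the forcing of finite partial functions $\kappa\times\omega\to2$ ordered by extension (adding $\kappa$ Cohen reals $\eta_\alpha:\omega\to2$), $G$ is $\mathbb{P}$-generic over $M$ and $M^*=M[G]$. Fix primes $p_0<p_1<\cdots$; $W=\bigoplus_{n\in\omega}\mathbb{Q}x_n\oplus\bigoplus_{\alpha<\kappa}\mathbb{Q}y_\alpha$ on independent elements, $F=\bigoplus_n\mathbb{Z}x_n\oplus\bigoplus_{\alpha<\kappa}\mathbb{Z}y_\alpha$, and $H$ is the subgroup of $W$ generated by $F$ and all $p_n^{-1}(y_\alpha-x_n)$ with $\eta_\alpha(n)=1$. A subset $C\subseteq\kappa$ is closed unbounded if every subset of $C$ with supremum $<\kappa$ has its supremum in $C$, and $\sup C=\kappa$. *)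

theory Defs
  imports Complex_Main "HOL-Library.Function_Algebras" "HOL-Computational_Algebra.Primes"
begin

text \<open>Elements of W = (sum of Q x_n) + (sum of Q y_alpha) are represented as
  functions (nat + 'k) => rat (coordinates w.r.t. the independent elements);
  the ordinal kappa is represented by a well-order k on the type 'k.\<close>

type_synonym 'k vec = "nat + 'k \<Rightarrow> rat"

definition xv :: "nat \<Rightarrow> 'k vec" where "xv n = (\<lambda>i. if i = Inl n then 1 else 0)"
definition yv :: "'k \<Rightarrow> 'k vec" where "yv a = (\<lambda>i. if i = Inr a then 1 else 0)"

definition zsmult :: "int \<Rightarrow> ('i \<Rightarrow> rat) \<Rightarrow> ('i \<Rightarrow> rat)" where
  "zsmult n v = (\<lambda>i. of_int n * v i)"

inductive_set gen :: "('i \<Rightarrow> rat) set \<Rightarrow> ('i \<Rightarrow> rat) set" for S where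
  gen_zero: "0 \<in> gen S"
| gen_base: "s \<in> S \<Longrightarrow> s \<in> gen S"
| gen_diff: "a \<in> gen S \<Longrightarrow> b \<in> gen S \<Longrightarrow> a - b \<in> gen S"

definition is_subgroup :: "('i \<Rightarrow> rat) set \<Rightarrow> bool" where
  "is_subgroup A \<longleftrightarrow> 0 \<in> A \<and> (\<forall>a\<in>A. \<forall>b\<in>A. a - b \<in> A)"

definition pure_in :: "('i \<Rightarrow> rat) set \<Rightarrow> ('i \<Rightarrow> rat) set \<Rightarrow> bool" where
  "pure_in G A \<longleftrightarrow> is_subgroup A \<and> A \<subseteq> G \<and>
     (\<forall>g\<in>G. \<forall>n::int. n \<noteq> 0 \<and> zsmult n g \<in> A \<longrightarrow> g \<in> A)"

definition purif :: "('i \<Rightarrow> rat) set \<Rightarrow> ('i \<Rightarrow> rat) set \<Rightarrow> ('i \<Rightarrow> rat) set" where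
  "purif G S = {g \<in> G. \<exists>n::int. n \<noteq> 0 \<and> zsmult n g \<in> gen S}"

definition Hgrp :: "(nat \<Rightarrow> nat) \<Rightarrow> ('k \<Rightarrow> nat \<Rightarrow> bool) \<Rightarrow> 'k vec set" where
  "Hgrp p eta = gen ({xv n | n. True} \<union> {yv a | a. True} \<union>
      {(\<lambda>i. (1 / of_nat (p n)) * (yv a - xv n) i) | a n. eta a n})"

text \<open>Rank-1 torsion-free groups: nonzero subgroups of Q; a finite rank completely
  decomposable group: R_0 + ... + R_(m-1), realised inside nat => rat.\<close>
definition rank1 :: "rat set \<Rightarrow> bool" where
  "rank1 R \<longleftrightarrow> 0 \<in> R \<and> (\<forall>a\<in>R. \<forall>b\<in>R. a - b \<in> R) \<and> R \<noteq> {0}"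

definition cdgrp :: "nat \<Rightarrow> (nat \<Rightarrow> rat set) \<Rightarrow> (nat \<Rightarrow> rat) set" where
  "cdgrp m R = {v. (\<forall>i<m. v i \<in> R i) \<and> (\<forall>i\<ge>m. v i = 0)}"

definition fr_butler :: "('i \<Rightarrow> rat) set \<Rightarrow> bool" where
  "fr_butler B \<longleftrightarrow> is_subgroup B \<and>
     (\<exists>m R (f :: ('i \<Rightarrow> rat) \<Rightarrow> (nat \<Rightarrow> rat)).
        (\<forall>i<m. rank1 (R i)) \<and> inj_on f B \<and>
        (\<forall>a\<in>B. \<forall>b\<in>B. f (a + b) = f a + f b) \<and>
        pure_in (cdgrp m R) (f ` B))"

definition setsum_grp :: "('i \<Rightarrow> rat) set \<Rightarrow> ('i \<Rightarrow> rat) set \<Rightarrow> ('i \<Rightarrow> rat) set" where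
  "setsum_grp A B = {a + b | a b. a \<in> A \<and> b \<in> B}"

definition olt :: "'k rel \<Rightarrow> 'k \<Rightarrow> 'k \<Rightarrow> bool" where
  "olt k a b \<longleftrightarrow> (a, b) \<in> k \<and> a \<noteq> b"

definition is_zero :: "'k rel \<Rightarrow> 'k \<Rightarrow> bool" where
  "is_zero k z \<longleftrightarrow> (\<forall>a. (z, a) \<in> k)"

definition is_succ :: "'k rel \<Rightarrow> 'k \<Rightarrow> 'k \<Rightarrow> bool" where
  "is_succ k a b \<longleftrightarrow> olt k a b \<and> (\<forall>c. olt k a c \<longrightarrow> (b, c) \<in> k)"

definition is_limit :: "'k rel \<Rightarrow> 'k \<Rightarrow> bool" where
  "is_limit k d \<longleftrightarrow> (\<exists>b. olt k b d) \<and> (\<forall>b. olt k b d \<longrightarrow> (\<exists>c. olt k b c \<and> olt k c d))"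

definition is_sup :: "'k rel \<Rightarrow> 'k set \<Rightarrow> 'k \<Rightarrow> bool" where
  "is_sup k D s \<longleftrightarrow> (\<forall>d\<in>D. (d, s) \<in> k) \<and> (\<forall>t. (\<forall>d\<in>D. (d, t) \<in> k) \<longrightarrow> (s, t) \<in> k)"

definition B2_filtration :: "'k rel \<Rightarrow> 'k vec set \<Rightarrow> ('k \<Rightarrow> 'k vec set) \<Rightarrow> bool" where
  "B2_filtration k H Hf \<longleftrightarrow>
     H = (\<Union>a. Hf a) \<and>
     (\<forall>a. pure_in H (Hf a)) \<and>
     (\<forall>a b. (a, b) \<in> k \<longrightarrow> Hf a \<subseteq> Hf b) \<and>
     (\<forall>z. is_zero k z \<longrightarrow> Hf z = {0}) \<and>
     (\<forall>d. is_limit k d \<longrightarrow> Hf d = (\<Union>b\<in>{b. olt k b d}. Hf b)) \<and>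
     (\<forall>a b. is_succ k a b \<longrightarrow> (\<exists>B. fr_butler B \<and> B \<subseteq> H \<and> Hf b = setsum_grp (Hf a) B))"

definition club :: "'k rel \<Rightarrow> 'k set \<Rightarrow> bool" where
  "club k C \<longleftrightarrow>
     (\<forall>D s. D \<subseteq> C \<and> D \<noteq> {} \<and> is_sup k D s \<longrightarrow> s \<in> C) \<and>
     (\<forall>a. \<exists>d\<in>C. olt k a d)"

end

theory Submission imports Defs "HOL-Library.Countable_Set_Type" begin

unbundle cardinal_syntax

lemma gen_neg: "a \<in> gen S \<Longrightarrow> - a \<in> gen S"
  using gen_diff[OF gen_zero, of a S] by simp

lemma gen_add: "a \<in> gen S \<Longrightarrow> b \<in> gen S \<Longrightarrow> a + b \<in> gen S"
  using gen_diff[of a S "- b"] gen_neg by fastforce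

lemma zsmult_nat: assumes a: "a \<in> gen S" shows "zsmult (int m) a \<in> gen S"
proof (induction m)
  case 0
  have "zsmult (int 0) a = 0" by (simp add: zsmult_def fun_eq_iff)
  then show ?case using gen_zero[of S] by (simp only:)
next
  case (Suc m)
  have eq: "zsmult (int (Suc m)) a = zsmult (int m) a + a" by (simp add: zsmult_def fun_eq_iff algebra_simps)
  show ?case unfolding eq by (rule gen_add[OF Suc.IH a])
qed

lemma gen_zsmult: assumes a: "a \<in> gen S" shows "zsmult n a \<in> gen S"
proof (cases "n \<ge> 0")
  case True
  then have "n = int (nat n)" by simp
  then show ?thesis using zsmult_nat[OF a, of "nat n"] by (simp only:)
next
  case False
  have eq: "zsmult n a = - zsmult (int (nat (- n))) a" using False by (simp add: zsmult_def fun_eq_iff)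
  have "- zsmult (int (nat (- n))) a \<in> gen S" by (rule gen_neg[OF zsmult_nat[OF a]])
  then show ?thesis by (simp only: eq)
qed

lemma gen_mono: "S \<subseteq> T \<Longrightarrow> gen S \<subseteq> gen T"
proof
  fix x assume ST: "S \<subseteq> T" assume "x \<in> gen S" then show "x \<in> gen T"
    by (induction rule: gen.induct) (use ST in \<open>blast intro: gen.intros\<close>)+
qed

lemma gen_sub: "is_subgroup A \<Longrightarrow> S \<subseteq> A \<Longrightarrow> gen S \<subseteq> A"
proof
  fix x assume A: "is_subgroup A" "S \<subseteq> A" assume "x \<in> gen S" then show "x \<in> A"
    by (induction rule: gen.induct) (use A in \<open>unfold is_subgroup_def, blast\<close>)+
qed

lemma gen_finite: "x \<in> gen S \<Longrightarrow> \<exists>F. finite F \<and> F \<subseteq> S \<and> x \<in> gen F"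
proof (induction rule: gen.induct)
  case gen_zero then show ?case by (rule exI[of _ "{}"]) (blast intro: gen.intros)
next
  case (gen_base s) then show ?case by (intro exI[of _ "{s}"]) (auto intro: gen.intros)
next
  case (gen_diff a b)
  then obtain F1 F2 where "finite F1" "F1 \<subseteq> S" "a \<in> gen F1" "finite F2" "F2 \<subseteq> S" "b \<in> gen F2" by blast
  moreover have "gen F1 \<subseteq> gen (F1 \<union> F2)" "gen F2 \<subseteq> gen (F1 \<union> F2)" by (rule gen_mono, blast)+
  ultimately show ?case by (intro exI[of _ "F1 \<union> F2"] conjI) (blast intro: gen.intros)+
qed

lemma zsmult_1: "zsmult 1 a = a" by (simp add: zsmult_def)

lemma zsmult_add: "zsmult (n1 * n2) (a + b) = zsmult n2 (zsmult n1 a) + zsmult n1 (zsmult n2 b)"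
  by (simp add: zsmult_def fun_eq_iff algebra_simps)

lemma zsmult_diff: "zsmult (n1 * n2) (a - b) = zsmult n2 (zsmult n1 a) - zsmult n1 (zsmult n2 b)"
  by (simp add: zsmult_def fun_eq_iff algebra_simps)

lemma purif_add: "is_subgroup G \<Longrightarrow> a \<in> purif G S \<Longrightarrow> b \<in> purif G S \<Longrightarrow> a + b \<in> purif G S"
proof -
  assume G: "is_subgroup G" and a: "a \<in> purif G S" and b: "b \<in> purif G S"
  obtain n1 n2 where "n1 \<noteq> 0" and n1a: "zsmult n1 a \<in> gen S" and "n2 \<noteq> 0" and n2b: "zsmult n2 b \<in> gen S" and "a \<in> G" "b \<in> G"
    using a b unfolding purif_def by blast
  moreover have "a + b \<in> G" using G \<open>a \<in> G\<close> \<open>b \<in> G\<close> unfolding is_subgroup_def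
    by (metis diff_0 diff_minus_eq_add)
  moreover have "zsmult (n1*n2) (a+b) \<in> gen S"
    unfolding zsmult_add by (rule gen_add[OF gen_zsmult[OF n1a] gen_zsmult[OF n2b]])
  moreover have "n1 * n2 \<noteq> 0" using calculation by simp
  ultimately show ?thesis unfolding purif_def by blast
qed

lemma purif_mono: "S \<subseteq> T \<Longrightarrow> purif G S \<subseteq> purif G T"
  unfolding purif_def using gen_mono by blast

lemma purif_zero: assumes "0 \<in> G" shows "0 \<in> purif G S"
proof -
  have z: "zsmult 1 0 \<in> gen S" unfolding zsmult_1 by (rule gen_zero)
  show ?thesis unfolding purif_def
  proof (intro CollectI conjI exI[of _ "1::int"])
  qed (fact assms, simp, fact z)
qed

lemma is_subgroup_gen: "is_subgroup (gen S)"
  unfolding is_subgroup_def by (auto intro: gen.intros)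

lemma cdgrp_countable: "countable (cdgrp m R)"
proof -
  have "inj_on (\<lambda>v. map v [0..<m]) (cdgrp m R)"
  proof (rule inj_onI)
    fix u v assume "u \<in> cdgrp m R" "v \<in> cdgrp m R" "map u [0..<m] = map v [0..<m]"
    show "u = v"
    proof
      fix i show "u i = v i"
      proof (cases "i < m")
        case True
        then show ?thesis using \<open>map u [0..<m] = map v [0..<m]\<close> by (simp add: map_eq_conv)
      next
        case False
        then show ?thesis using \<open>u \<in> cdgrp m R\<close> \<open>v \<in> cdgrp m R\<close> unfolding cdgrp_def by simp
      qed
    qed
  qed
  thus ?thesis by (rule countableI')
qed

lemma butler_countable: "fr_butler B \<Longrightarrow> countable B"
proof -
  assume "fr_butler B"
  then obtain m R f where i: "inj_on f B" and pu: "pure_in (cdgrp m R) (f ` B)"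
    unfolding fr_butler_def by blast
  from pu have "f ` B \<subseteq> cdgrp m R" unfolding pure_in_def by blast
  note i this
  moreover have "countable (f ` B)" by (rule countable_subset[OF calculation(2) cdgrp_countable])
  ultimately show ?thesis using countable_image_inj_on by blast
qed

locale kw =
  fixes k :: "'k rel"
  assumes CO: "Card_order k" and FU: "Field k = UNIV" and REG: "regularCard k"
    and NL: "natLeq <o k"
begin

lemma WO: "well_order_on UNIV k"
  using CO FU card_order_on_well_order_on by metis

lemma lin: "linear_order_on UNIV k" and wfk: "wf (k - Id)"
  using WO unfolding well_order_on_def by auto

lemma refl: "(a,a) \<in> k"
  using lin unfolding linear_order_on_def partial_order_on_def preorder_on_def refl_on_def by auto

lemma trans: "(a,b) \<in> k \<Longrightarrow> (b,c) \<in> k \<Longrightarrow> (a,c) \<in> k"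
  using lin unfolding linear_order_on_def partial_order_on_def preorder_on_def trans_def by blast

lemma antisym: "(a,b) \<in> k \<Longrightarrow> (b,a) \<in> k \<Longrightarrow> a = b"
  using lin unfolding linear_order_on_def partial_order_on_def antisym_def by blast

lemma total: "(a,b) \<in> k \<or> (b,a) \<in> k"
  using lin refl unfolding linear_order_on_def total_on_def by (cases "a = b") auto

lemma infk: "\<not> finite (Field k)"
proof
  assume "finite (Field k)"
  hence "|Field k| <o natLeq" using finite_iff_ordLess_natLeq by blast
  moreover have "k =o |Field k|" using card_of_Field_ordIso[OF CO] ordIso_symmetric by blast
  ultimately have "k <o natLeq" using ordIso_ordLess_trans by blast
  thus False using NL ordLess_transitive ordLess_irreflexive by blast
qed

lemma nomax: "\<exists>b. olt k a b"
  using infinite_Card_order_limit[OF CO infk] FU unfolding olt_def by auto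

lemma olt_le: "olt k b c \<Longrightarrow> (c,d) \<in> k \<Longrightarrow> olt k b d"
  unfolding olt_def using trans antisym by blast

lemma le_olt: "(b,c) \<in> k \<Longrightarrow> olt k c d \<Longrightarrow> olt k b d"
  unfolding olt_def using trans antisym by blast

lemma small_bounded:
  assumes "|K| <o k" shows "\<exists>u. \<forall>x\<in>K. (x,u) \<in> k"
proof -
  have "\<not> cofinal K k"
  proof
    assume "cofinal K k"
    hence "|K| =o k" using REG FU unfolding regularCard_def by blast
    thus False using assms not_ordLess_ordIso by blast
  qed
  then obtain a where "\<forall>b\<in>K. a = b \<or> (a,b) \<notin> k" unfolding cofinal_def FU by blast
  hence "\<forall>b\<in>K. (b,a) \<in> k" using total refl by metis
  thus ?thesis by blast
qed

lemma countable_small: "countable K \<Longrightarrow> |K| <o k"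
  using countable_card_le_natLeq ordLeq_ordLess_trans NL by blast

lemma underS_small: "|{b. olt k b a}| <o k"
proof -
  have "{b. olt k b a} = underS k a" unfolding underS_def olt_def by auto
  thus ?thesis using card_of_underS[OF CO] FU by simp
qed

lemma image_small: "|A| <o k \<Longrightarrow> |f ` A| <o k"
  using card_of_image ordLeq_ordLess_trans by blast

lemma max2: "\<exists>u. (a,u) \<in> k \<and> (b,u) \<in> k"
  using total refl by blast

end
locale kwH = kw k for k :: "'k rel" +
  fixes p :: "nat \<Rightarrow> nat" and eta :: "'k \<Rightarrow> nat \<Rightarrow> bool" and Hf :: "'k \<Rightarrow> 'k vec set"
  assumes pp: "\<forall>n. prime (p n)" and B2: "B2_filtration k (Hgrp p eta) Hf"
begin

abbreviation "H \<equiv> Hgrp p eta"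

lemma not_le: "(a,b) \<notin> k \<Longrightarrow> olt k b a"
  unfolding olt_def using total refl by blast

definition Sg :: "'k \<Rightarrow> 'k vec set" where
  "Sg d = {xv n | n. True} \<union> {yv b | b. olt k b d}"

definition P :: "'k \<Rightarrow> 'k vec set" where
  "P d = purif H (Sg d)"

lemmas B2' = B2[unfolded B2_filtration_def]
lemmas HU = B2'[THEN conjunct1]
lemmas pure = B2'[THEN conjunct2, THEN conjunct1, rule_format]
lemmas Hmono = B2'[THEN conjunct2, THEN conjunct2, THEN conjunct1, rule_format]
lemmas Hzero = B2'[THEN conjunct2, THEN conjunct2, THEN conjunct2, THEN conjunct1, rule_format]
lemmas Hlim = B2'[THEN conjunct2, THEN conjunct2, THEN conjunct2, THEN conjunct2, THEN conjunct1, rule_format]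
lemmas Hsucc = B2'[THEN conjunct2, THEN conjunct2, THEN conjunct2, THEN conjunct2, THEN conjunct2, rule_format]

lemma Hsub: "is_subgroup H" unfolding Hgrp_def by (rule is_subgroup_gen)

lemma H0: "0 \<in> H" unfolding Hgrp_def by (rule gen_zero)

lemma Sg_H: "Sg d \<subseteq> H"
  unfolding Sg_def Hgrp_def by (auto intro: gen_base)

lemma Sg_mono: "(a,b) \<in> k \<Longrightarrow> Sg a \<subseteq> Sg b"
  unfolding Sg_def using olt_le by blast

lemma P_mono: "(a,b) \<in> k \<Longrightarrow> P a \<subseteq> P b"
  unfolding P_def using Sg_mono purif_mono by blast

lemma pne: "p n \<noteq> 0" using pp by (metis not_prime_0)

lemma elemH: assumes h: "h \<in> H" shows "\<exists>\<gamma>. h \<in> P \<gamma>"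
proof -
  have "\<exists>\<gamma> n. n \<noteq> 0 \<and> zsmult n h \<in> gen (Sg \<gamma>)"
    using h unfolding Hgrp_def
  proof (induction rule: gen.induct)
    case gen_zero
    have "zsmult 1 0 \<in> gen (Sg undefined)" unfolding zsmult_1 by (rule gen_zero)
    note zz = this
    show ?case by (rule exI[of _ undefined], rule exI[of _ 1], rule conjI[OF _ zz]) (simp add: pne)
  next
    case (gen_base s)
    then consider (x) n where "s = xv n" | (y) a where "s = yv a"
      | (f) a n where "s = (\<lambda>i. (1 / of_nat (p n)) * (yv a - xv n) i)" by blast
    then show ?case
    proof cases
      case x
      then have "s \<in> Sg undefined" unfolding Sg_def by blast
      then have "zsmult 1 s \<in> gen (Sg undefined)" unfolding zsmult_1 by (rule gen.gen_base)
      note zz = this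
      show ?thesis by (rule exI[of _ undefined], rule exI[of _ 1], rule conjI[OF _ zz]) (simp add: pne)
    next
      case y
      obtain g where "olt k a g" using nomax by blast
      then have "s \<in> Sg g" unfolding Sg_def y by blast
      then have "zsmult 1 s \<in> gen (Sg g)" unfolding zsmult_1 by (rule gen.gen_base)
      note zz = this
      show ?thesis by (rule exI[of _ g], rule exI[of _ 1], rule conjI[OF _ zz]) (simp add: pne)
    next
      case f
      obtain g where "olt k a g" using nomax by blast
      then have "yv a \<in> Sg g" "xv n \<in> Sg g" unfolding Sg_def by blast+
      then have "yv a - xv n \<in> gen (Sg g)" by (intro gen.gen_diff gen.gen_base)
      moreover have "zsmult (int (p n)) s = yv a - xv n"
        unfolding f zsmult_def using pne[of n] by (simp add: fun_eq_iff)
      ultimately have "zsmult (int (p n)) s \<in> gen (Sg g)" by simp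
      note zz = this
      show ?thesis by (rule exI[of _ g], rule exI[of _ "int (p n)"], rule conjI[OF _ zz]) (simp add: pne)
    qed
  next
    case (gen_diff a b)
    then obtain g1 n1 g2 n2 where 1: "n1 \<noteq> 0" "zsmult n1 a \<in> gen (Sg g1)"
      and 2: "n2 \<noteq> 0" "zsmult n2 b \<in> gen (Sg g2)" by blast
    obtain u where u: "(g1,u) \<in> k" "(g2,u) \<in> k" using max2 by blast
    have z1: "zsmult n1 a \<in> gen (Sg u)" and z2: "zsmult n2 b \<in> gen (Sg u)"
      using 1 2 gen_mono[OF Sg_mono[OF u(1)]] gen_mono[OF Sg_mono[OF u(2)]] by blast+
    have "zsmult (n1*n2) (a - b) \<in> gen (Sg u)"
      unfolding zsmult_diff by (rule gen.gen_diff[OF gen_zsmult[OF z1] gen_zsmult[OF z2]])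
    note zz = this
    show ?case by (rule exI[of _ u], rule exI[of _ "n1*n2"], rule conjI[OF _ zz]) (simp add: pne 1 2)
  qed
  then show ?thesis using h unfolding P_def purif_def by blast
qed

lemma lemB: "\<exists>\<gamma>. P \<beta> \<subseteq> Hf \<gamma>"
proof -
  define c where "c s = (SOME a. s \<in> Hf a)" for s
  have c: "s \<in> Hf (c s)" if "s \<in> H" for s
  proof -
    from that HU obtain a where "s \<in> Hf a" by blast
    then show ?thesis unfolding c_def by (rule someI)
  qed
  have "|(\<lambda>n. c (xv n)) ` UNIV| <o k" by (rule countable_small) simp
  then obtain u1 where u1: "\<forall>n. (c (xv n), u1) \<in> k" using small_bounded by blast
  have "|(\<lambda>b. c (yv b)) ` {b. olt k b \<beta>}| <o k" by (rule image_small[OF underS_small])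
  then obtain u2 where u2: "\<forall>b. olt k b \<beta> \<longrightarrow> (c (yv b), u2) \<in> k" using small_bounded by blast
  obtain u where u: "(u1,u) \<in> k" "(u2,u) \<in> k" using max2 by blast
  have "Sg \<beta> \<subseteq> Hf u"
  proof
    fix s assume s: "s \<in> Sg \<beta>"
    then have "s \<in> Hf (c s)" using c Sg_H by blast
    moreover have "(c s, u) \<in> k"
    proof -
      from s consider (x) n where "s = xv n" | (y) b where "s = yv b" "olt k b \<beta>" unfolding Sg_def by blast
      then show ?thesis
      proof cases
        case x then show ?thesis using trans[OF u1[rule_format, of n] u(1)] by simp
      next
        case y then show ?thesis using trans[OF u2[rule_format, OF y(2)] u(2)] by simp
      qed
    qed
    ultimately show "s \<in> Hf u" using Hmono by blast
  qed
  then have "gen (Sg \<beta>) \<subseteq> Hf u" using gen_sub pure[of u] unfolding pure_in_def by blast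
  then have "P \<beta> \<subseteq> Hf u" using pure[of u] unfolding P_def purif_def pure_in_def by blast
  then show ?thesis by blast
qed

lemma lemC: "\<exists>\<gamma>. Hf \<beta> \<subseteq> P \<gamma>"
proof (induction \<beta> rule: wf_induct_rule[OF wfk])
  case (1 \<beta>)
  show ?case
  proof (cases "is_zero k \<beta>")
    case True
    have "Hf \<beta> \<subseteq> P undefined" unfolding Hzero[OF True] P_def using purif_zero[OF H0] by simp
    then show ?thesis by blast
  next
    case False
    define L where "L = {b. olt k b \<beta>}"
    have IH: "\<exists>\<gamma>. Hf b \<subseteq> P \<gamma>" if "b \<in> L" for b
      using 1 that unfolding L_def olt_def by blast
    show ?thesis
    proof (cases "\<exists>a\<in>L. \<forall>c\<in>L. (c,a) \<in> k")
      case True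
      then obtain a where aL: "a \<in> L" and amax: "\<forall>c\<in>L. (c,a) \<in> k" by blast
      have "is_succ k a \<beta>" unfolding is_succ_def
      proof (intro conjI allI impI)
        show "olt k a \<beta>" using aL unfolding L_def by blast
        fix c assume ac: "olt k a c"
        show "(\<beta>, c) \<in> k"
        proof (rule ccontr)
          assume "(\<beta>, c) \<notin> k"
          then have "c \<in> L" using not_le unfolding L_def by blast
          then show False using amax ac antisym unfolding olt_def by blast
        qed
      qed
      then obtain B where B: "fr_butler B" "B \<subseteq> H" "Hf \<beta> = setsum_grp (Hf a) B"
        using Hsucc by blast
      obtain g1 where g1: "Hf a \<subseteq> P g1" using IH aL by blast
      define c where "c s = (SOME g. s \<in> P g)" for s
      have c: "s \<in> P (c s)" if "s \<in> H" for s
        using elemH[OF that] unfolding c_def by (rule someI_ex)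
      have "|c ` B| <o k" using butler_countable[OF B(1)] by (intro countable_small) simp
      then obtain u where u: "\<forall>b\<in>B. (c b, u) \<in> k" using small_bounded by blast
      obtain g where g: "(g1,g) \<in> k" "(u,g) \<in> k" using max2 by blast
      have "Hf \<beta> \<subseteq> P g"
      proof
        fix x assume "x \<in> Hf \<beta>"
        then obtain a' b' where x: "x = a' + b'" "a' \<in> Hf a" "b' \<in> B"
          unfolding B(3) setsum_grp_def by blast
        have "a' \<in> P g" using x g1 P_mono[OF g(1)] by blast
        moreover have "b' \<in> P g"
        proof -
          have "b' \<in> P (c b')" using c[of b'] B(2) x by blast
          moreover have "(c b', g) \<in> k" using trans[OF u[rule_format, OF x(3)] g(2)] .
          ultimately show ?thesis using P_mono by blast
        qed
        ultimately show "x \<in> P g" unfolding x P_def by (rule purif_add[OF Hsub])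
      qed
      then show ?thesis by blast
    next
      case False
      have "\<exists>a. (\<beta>, a) \<notin> k" using \<open>\<not> is_zero k \<beta>\<close> unfolding is_zero_def by blast
      then have Lne: "\<exists>b. olt k b \<beta>" using not_le by blast
      have "is_limit k \<beta>" unfolding is_limit_def
      proof (intro conjI allI impI Lne)
        fix b assume "olt k b \<beta>"
        then obtain c where "c \<in> L" "(c, b) \<notin> k" using False unfolding L_def by blast
        then show "\<exists>c. olt k b c \<and> olt k c \<beta>" using not_le unfolding L_def by blast
      qed
      then have HL: "Hf \<beta> = (\<Union>b\<in>L. Hf b)" using Hlim unfolding L_def by blast
      define c where "c b = (SOME g. Hf b \<subseteq> P g)" for b
      have c: "Hf b \<subseteq> P (c b)" if "b \<in> L" for b
        using IH[OF that] unfolding c_def by (rule someI_ex)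
      have "|c ` L| <o k" unfolding L_def by (rule image_small[OF underS_small])
      then obtain u where u: "\<forall>b\<in>L. (c b, u) \<in> k" using small_bounded by blast
      have "Hf \<beta> \<subseteq> P u" unfolding HL using c u P_mono by blast
      then show ?thesis by blast
    qed
  qed
qed

lemma fin_bound:
  assumes D: "D \<noteq> {}" and cof: "\<forall>b. olt k b s \<longrightarrow> (\<exists>d\<in>D. olt k b d)"
  shows "finite F \<Longrightarrow> F \<subseteq> Sg s \<Longrightarrow> \<exists>d\<in>D. F \<subseteq> Sg d"
proof (induction F rule: finite_induct)
  case empty then show ?case using D by blast
next
  case (insert x F)
  then obtain d1 where d1: "d1 \<in> D" "F \<subseteq> Sg d1" by blast
  have "x \<in> Sg s" using insert by blast
  then consider (x) n where "x = xv n" | (y) b where "x = yv b" "olt k b s" unfolding Sg_def by blast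
  then show ?case
  proof cases
    case x
    then have "x \<in> Sg d1" unfolding Sg_def by blast
    then show ?thesis using d1 by blast
  next
    case y
    then obtain d2 where d2: "d2 \<in> D" "olt k b d2" using cof by blast
    show ?thesis
    proof (cases "(d1,d2) \<in> k")
      case True
      have "x \<in> Sg d2" using y d2 unfolding Sg_def by blast
      then show ?thesis using d1 d2 Sg_mono[OF True] by blast
    next
      case False
      then have "(d2,d1) \<in> k" using total by blast
      then have "x \<in> Sg d1" using y d2 olt_le unfolding Sg_def by blast
      then show ?thesis using d1 by blast
    qed
  qed
qed

lemma cof_lemma:
  assumes D: "D \<noteq> {}" and below: "\<forall>d\<in>D. olt k d s" and cof: "\<forall>b. olt k b s \<longrightarrow> (\<exists>d\<in>D. olt k b d)"
  shows "Hf s = (\<Union>d\<in>D. Hf d)" and "P s = (\<Union>d\<in>D. P d)"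
proof -
  have "is_limit k s" unfolding is_limit_def using D below cof by blast
  then have HL: "Hf s = (\<Union>b\<in>{b. olt k b s}. Hf b)" by (rule Hlim)
  show "Hf s = (\<Union>d\<in>D. Hf d)"
  proof
    show "Hf s \<subseteq> (\<Union>d\<in>D. Hf d)" unfolding HL using cof Hmono unfolding olt_def by blast
    show "(\<Union>d\<in>D. Hf d) \<subseteq> Hf s" unfolding HL using below by blast
  qed
  show "P s = (\<Union>d\<in>D. P d)"
  proof
    show "(\<Union>d\<in>D. P d) \<subseteq> P s" using below P_mono unfolding olt_def by blast
    show "P s \<subseteq> (\<Union>d\<in>D. P d)"
    proof
      fix g assume "g \<in> P s"
      then obtain n where g: "g \<in> H" "n \<noteq> 0" "zsmult n g \<in> gen (Sg s)" unfolding P_def purif_def by blast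
      then obtain F where F: "finite F" "F \<subseteq> Sg s" "zsmult n g \<in> gen F" using gen_finite by blast
      then obtain d where d: "d \<in> D" "F \<subseteq> Sg d" using fin_bound[OF D cof] by blast
      then have "zsmult n g \<in> gen (Sg d)" using F gen_mono by blast
      then have "g \<in> P d" using g unfolding P_def purif_def by blast
      then show "g \<in> (\<Union>d\<in>D. P d)" using d by blast
    qed
  qed
qed

definition CC where "CC = {d. Hf d = P d}"

lemma closed: assumes "D \<subseteq> CC" "D \<noteq> {}" "is_sup k D s" shows "s \<in> CC"
proof (cases "s \<in> D")
  case True then show ?thesis using assms by blast
next
  case False
  have below: "\<forall>d\<in>D. olt k d s" using assms(3) False unfolding is_sup_def olt_def by blast
  have cof: "\<forall>b. olt k b s \<longrightarrow> (\<exists>d\<in>D. olt k b d)"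
  proof (intro allI impI, rule ccontr)
    fix b assume bs: "olt k b s" and "\<not> (\<exists>d\<in>D. olt k b d)"
    then have "\<forall>d\<in>D. (d, b) \<in> k" using not_le by blast
    then have "(s, b) \<in> k" using assms(3) unfolding is_sup_def by blast
    then show False using bs antisym unfolding olt_def by blast
  qed
  have "Hf s = (\<Union>d\<in>D. Hf d)" "P s = (\<Union>d\<in>D. P d)" using cof_lemma[OF assms(2) below cof] by blast+
  moreover have "(\<Union>d\<in>D. Hf d) = (\<Union>d\<in>D. P d)" using assms(1) unfolding CC_def by auto
  ultimately show ?thesis unfolding CC_def by simp
qed

lemma exF: "\<exists>\<gamma>. olt k \<beta> \<gamma> \<and> Hf \<beta> \<subseteq> P \<gamma> \<and> P \<beta> \<subseteq> Hf \<gamma>"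
proof -
  obtain g1 where g1: "Hf \<beta> \<subseteq> P g1" using lemC by blast
  obtain g2 where g2: "P \<beta> \<subseteq> Hf g2" using lemB by blast
  obtain g3 where g3: "olt k \<beta> g3" using nomax by blast
  obtain u1 where u1: "(g1,u1) \<in> k" "(g2,u1) \<in> k" using max2 by blast
  obtain u where u: "(u1,u) \<in> k" "(g3,u) \<in> k" using max2 by blast
  have "olt k \<beta> u" using g3 u olt_le by blast
  moreover have "Hf \<beta> \<subseteq> P u" using g1 P_mono[OF trans[OF u1(1) u(1)]] by blast
  moreover have "P \<beta> \<subseteq> Hf u" using g2 Hmono[OF trans[OF u1(2) u(1)]] by blast
  ultimately show ?thesis by blast
qed

lemma unbounded: "\<exists>d\<in>CC. olt k a0 d"
proof -
  define F where "F b = (SOME g. olt k b g \<and> Hf b \<subseteq> P g \<and> P b \<subseteq> Hf g)" for b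
  have F: "olt k b (F b) \<and> Hf b \<subseteq> P (F b) \<and> P b \<subseteq> Hf (F b)" for b
    unfolding F_def by (rule someI_ex[OF exF])
  define a where "a = rec_nat a0 (\<lambda>_ x. F x)"
  have a0: "a 0 = a0" and aS: "a (Suc n) = F (a n)" for n unfolding a_def by simp_all
  define U where "U = {u. \<forall>n. (a n, u) \<in> k}"
  have "|range a| <o k" by (rule countable_small) simp
  then obtain u where "u \<in> U" using small_bounded unfolding U_def by blast
  then obtain d where dU: "d \<in> U" and dmin: "\<And>y. (y, d) \<in> k - Id \<Longrightarrow> y \<notin> U"
    using wfE_min[OF wfk] by blast
  have below: "\<forall>x\<in>range a. olt k x d"
  proof
    fix x assume "x \<in> range a"
    then obtain n where n: "x = a n" by blast
    have "(a n, d) \<in> k" "(a (Suc n), d) \<in> k" using dU unfolding U_def by blast+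
    moreover have "olt k (a n) (a (Suc n))" using F aS by simp
    ultimately show "olt k x d" unfolding n using olt_le by blast
  qed
  have cof: "\<forall>b. olt k b d \<longrightarrow> (\<exists>x\<in>range a. olt k b x)"
  proof (intro allI impI)
    fix b assume "olt k b d"
    then have "b \<notin> U" using dmin unfolding olt_def by blast
    then obtain n where "(a n, b) \<notin> k" unfolding U_def by blast
    then have "olt k b (a n)" using not_le by blast
    then show "\<exists>x\<in>range a. olt k b x" by blast
  qed
  have E: "Hf d = (\<Union>x\<in>range a. Hf x)" "P d = (\<Union>x\<in>range a. P x)"
    using cof_lemma[of "range a" d] below cof by blast+
  have "Hf d \<subseteq> P d"
  proof -
    have "Hf (a n) \<subseteq> P (a (Suc n))" for n using F aS by simp
    then show ?thesis unfolding E by blast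
  qed
  moreover have "P d \<subseteq> Hf d"
  proof -
    have "P (a n) \<subseteq> Hf (a (Suc n))" for n using F aS by simp
    then show ?thesis unfolding E by blast
  qed
  ultimately have "d \<in> CC" unfolding CC_def by blast
  moreover have "olt k a0 d" using below unfolding a0[symmetric] by blast
  ultimately show ?thesis by blast
qed

lemma club_CC: "club k CC"
  unfolding club_def using closed unbounded by blast

end

theorem lemma5p2:
  fixes k :: "'k rel" and p :: "nat \<Rightarrow> nat" and eta :: "'k \<Rightarrow> nat \<Rightarrow> bool"
    and Hf :: "'k \<Rightarrow> 'k vec set"
  assumes "Card_order k" and "Field k = UNIV" and "regularCard k"
    and "(cardSuc (cardSuc (cardSuc (cardSuc natLeq))), k) \<in> ordLeq"
    and "strict_mono p" and "\<forall>n. prime (p n)"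
    and "B2_filtration k (Hgrp p eta) Hf"
  shows "club k {d. Hf d = purif (Hgrp p eta) ({xv n | n. True} \<union> {yv b | b. olt k b d})}"
proof -
  have C0: "Card_order natLeq" by (rule natLeq_Card_order)
  have C1: "Card_order (cardSuc natLeq)" by (rule cardSuc_Card_order[OF C0])
  have C2: "Card_order (cardSuc (cardSuc natLeq))" by (rule cardSuc_Card_order[OF C1])
  have C3: "Card_order (cardSuc (cardSuc (cardSuc natLeq)))" by (rule cardSuc_Card_order[OF C2])
  have l1: "natLeq <o cardSuc natLeq" by (rule cardSuc_greater[OF C0])
  have l2: "cardSuc natLeq \<le>o cardSuc (cardSuc natLeq)" by (rule ordLess_imp_ordLeq[OF cardSuc_greater[OF C1]])
  have l3: "cardSuc (cardSuc natLeq) \<le>o cardSuc (cardSuc (cardSuc natLeq))" by (rule ordLess_imp_ordLeq[OF cardSuc_greater[OF C2]])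
  have l4: "cardSuc (cardSuc (cardSuc natLeq)) \<le>o cardSuc (cardSuc (cardSuc (cardSuc natLeq)))" by (rule ordLess_imp_ordLeq[OF cardSuc_greater[OF C3]])
  have l5: "cardSuc (cardSuc (cardSuc (cardSuc natLeq))) \<le>o k" using assms(4) .
  have NL: "natLeq <o k"
    using ordLess_ordLeq_trans[OF l1 ordLeq_transitive[OF l2 ordLeq_transitive[OF l3 ordLeq_transitive[OF l4 l5]]]] .
  interpret kwH k p eta Hf
    by unfold_locales (use assms NL in auto)
  have "club k CC" by (rule club_CC)
  then show ?thesis unfolding CC_def P_def Sg_def .
qed

end
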